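(* There exists $\beta>\frac23$ such that, with $I=(\frac23,\beta)$, the function $\widetilde{M_f}$ defined in the context satisfies $\widetilde{M_f}(r)>0$ for all $r\in I$.
   Context: For $r>\frac23$ let $u_b(r)\in(\frac65,\frac43)$ be the unique $u\in(\frac65,\frac43)$ with $2-u+2q(1-u)=0$ at $q=1+\sqrt{\frac{r+u-2}{r+0.1}}$. Set $q_{f,\pm}(r)=1\pm\sqrt{\frac{r}{r+0.1}}$, $q_{b,\pm}(r)=1\pm\sqrt{\frac{r+u_b(r)-2}{r+0.1}}$, $S(r)=(q_{f,+}-2q_{f,-})+(q_{b,+}-2q_{b,-})$ and $D_0(r)=\frac{2(2-u_b(r))^2}{(r+0.1)S(r)^2}$ (equivalently, $D_0(r)>0$ together with some $\mu_0(r)$ solves $2+\mu=\frac12\sqrt{2D(r+0.1)}(q_{f,+}-2q_{f,-})$ and $u_b+\mu=-\frac12\sqrt{2D(r+0.1)}(q_{b,+}-2q_{b,-})$). Let $\phi(\chi)=(1+e^{-\frac{\sqrt2}{2}\chi})^{-1}$, $\kappa_f(r)=\frac12-\frac{q_{f,-}(r)}{q_{f,+}(r)}$ and $$\widetilde{M_f}(r)=-q_{f,+}(r)\sqrt{\frac{r+0.1}{D_0(r)}}\int_{-\infty}^{\infty}e^{-\sqrt2\kappa_f(r)\chi}\phi'(\chi)^2d\chi+\int_{-\infty}^{\infty}e^{-\sqrt2\kappa_f(r)\chi}\phi'(\chi)\phi(\chi)d\chi .$$ *)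

theory Defs
  imports "HOL-Analysis.Analysis"
begin

definition qb_of :: "real \<Rightarrow> real \<Rightarrow> real" where
  "qb_of r u = 1 + sqrt ((r + u - 2) / (r + 1/10))"

definition u_b :: "real \<Rightarrow> real" where
  "u_b r = (THE u. u \<in> {6/5<..<4/3} \<and> 2 - u + 2 * qb_of r u * (1 - u) = 0)"

definition q_fp :: "real \<Rightarrow> real" where "q_fp r = 1 + sqrt (r / (r + 1/10))"
definition q_fm :: "real \<Rightarrow> real" where "q_fm r = 1 - sqrt (r / (r + 1/10))"
definition q_bp :: "real \<Rightarrow> real" where
  "q_bp r = 1 + sqrt ((r + u_b r - 2) / (r + 1/10))"
definition q_bm :: "real \<Rightarrow> real" where
  "q_bm r = 1 - sqrt ((r + u_b r - 2) / (r + 1/10))"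

definition S_fun :: "real \<Rightarrow> real" where
  "S_fun r = (q_fp r - 2 * q_fm r) + (q_bp r - 2 * q_bm r)"

definition D0 :: "real \<Rightarrow> real" where
  "D0 r = 2 * (2 - u_b r)^2 / ((r + 1/10) * (S_fun r)^2)"

definition phi :: "real \<Rightarrow> real" where
  "phi x = 1 / (1 + exp (- (sqrt 2 / 2) * x))"

definition kappa_f :: "real \<Rightarrow> real" where
  "kappa_f r = 1/2 - q_fm r / q_fp r"

definition M_f_tilde :: "real \<Rightarrow> real" where
  "M_f_tilde r =
     - q_fp r * sqrt ((r + 1/10) / D0 r)
         * (LBINT x. exp (- sqrt 2 * kappa_f r * x) * (deriv phi x)^2)
     + (LBINT x. exp (- sqrt 2 * kappa_f r * x) * deriv phi x * phi x)"

end

theory Submission imports Defs "HOL-Real_Asymp.Real_Asymp" begin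

definition dphi :: "real \<Rightarrow> real" where
  "dphi x = (sqrt 2 / 2) * exp (- (sqrt 2 / 2) * x) / (1 + exp (- (sqrt 2 / 2) * x))^2"

lemma one_exp_nz: "1 + exp (t::real) \<noteq> 0"
  by (smt (verit) exp_gt_zero)

lemma phi_deriv: "(phi has_real_derivative dphi x) (at x)"
  unfolding phi_def dphi_def
  apply (rule derivative_eq_intros refl | simp add: one_exp_nz)+
  apply (simp add: field_simps power2_eq_square one_exp_nz)
  done

lemma deriv_phi: "deriv phi = dphi"
  using phi_deriv DERIV_imp_deriv by blast

lemma phi_top: "(phi \<longlongrightarrow> 1) at_top"
  unfolding phi_def by real_asymp

lemma phi_bot: "(phi \<longlongrightarrow> 0) at_bot"
  unfolding phi_def by real_asymp

lemma dphi_pos: "dphi x > 0" unfolding dphi_def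
  by (intro divide_pos_pos mult_pos_pos) (auto simp: one_exp_nz)

lemma dphi_cont: "isCont dphi x" unfolding dphi_def
  by (intro continuous_intros) (auto simp: one_exp_nz)

lemma dphi_integrable: "integrable lborel dphi"
proof -
  have "set_integrable lborel (einterval (-\<infinity>) \<infinity>) dphi"
    apply (rule interval_integral_FTC_nonneg(1)[where F=phi and A=0 and B=1])
    using phi_deriv phi_top phi_bot dphi_pos dphi_cont
    by (auto simp: ereal_tendsto_simps less_imp_le)
  then show ?thesis by (simp add: set_integrable_def einterval_def)
qed


definition F1 :: "real \<Rightarrow> real \<Rightarrow> real" where
  "F1 k x = exp (- sqrt 2 * k * x) * (dphi x)^2"
definition F2 :: "real \<Rightarrow> real \<Rightarrow> real" where
  "F2 k x = exp (- sqrt 2 * k * x) * dphi x * phi x"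

lemma pointwise:
  fixes k A x :: real
  assumes k0: "0 \<le> k" and k1: "k \<le> 1/2" and As: "A * (sqrt 2 / 2) \<le> 1"
  shows "0 < F2 k x" "F2 k x \<le> dphi x" "0 \<le> F1 k x" "F1 k x \<le> dphi x" "0 < F2 k x - A * F1 k x"
proof -
  define E where "E = exp (- (sqrt 2 / 2) * x)"
  define s where "s = sqrt 2 / 2"
  define w where "w = exp (- sqrt 2 * k * x)"
  have E0: "E > 0" unfolding E_def by simp
  have s0: "0 < s" "s < 1" unfolding s_def by (simp_all add: real_sqrt_less_iff[where x=2 and y=4, simplified])
  have w0: "w > 0" unfolding w_def by simp
  have ph: "phi x = 1 / (1 + E)" unfolding phi_def E_def by simp
  have dp: "dphi x = s * E / (1 + E)^2" unfolding dphi_def E_def s_def by simp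
  have wle: "w \<le> 1 + E"
  proof (cases "x \<ge> 0")
    case True
    have "- sqrt 2 * k * x \<le> 0" using True k0 by (simp add: mult_nonneg_nonneg)
    then have "w \<le> 1" unfolding w_def by simp
    then show ?thesis using E0 by simp
  next
    case False
    have "sqrt 2 * k * (-x) \<le> sqrt 2 * (1/2) * (-x)"
      using False k1 by (intro mult_right_mono mult_left_mono) auto
    then have "w \<le> E" unfolding w_def E_def by simp
    then show ?thesis by simp
  qed
  have F2e: "F2 k x = w * s * E / (1 + E)^3"
    unfolding F2_def w_def[symmetric] ph dp by (simp add: field_simps power2_eq_square power3_eq_cube)
  have F1e: "F1 k x = F2 k x * (s * E / (1 + E))"
    unfolding F2_def F1_def w_def[symmetric] ph dp using E0 by (simp add: field_simps power2_eq_square power3_eq_cube)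
  show F2p: "0 < F2 k x" unfolding F2e using E0 s0 w0 by simp
  show F2l: "F2 k x \<le> dphi x"
  proof -
    have "w * s * E / (1 + E)^3 \<le> (1 + E) * s * E / (1 + E)^3"
      using wle E0 s0 by (intro divide_right_mono mult_right_mono) auto
    have E1: "1 + E \<noteq> 0" using E0 by simp
    have "(1 + E) * s * E / (1 + E)^3 = s * E / (1 + E)^2"
      using E1 by (simp add: power3_eq_cube power2_eq_square)
    also have "\<dots> = dphi x" unfolding dp ..
    finally show ?thesis unfolding F2e using \<open>w * s * E / (1 + E)^3 \<le> (1 + E) * s * E / (1 + E)^3\<close> by linarith
  qed
  have p0: "0 < s * E / (1 + E)" using E0 s0 by simp
  have p1: "s * E / (1 + E) < 1"
  proof -
    have "s * E < 1 * E" using s0 E0 by (intro mult_strict_right_mono) auto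
    then have "s * E < 1 + E" by simp
    then show ?thesis using E0 by simp
  qed
  show "0 \<le> F1 k x" unfolding F1e by (rule mult_nonneg_nonneg) (use F2p p0 in linarith)+
  show "F1 k x \<le> dphi x"
  proof -
    have "F2 k x * (s * E / (1 + E)) \<le> F2 k x" using F2p p1 by (intro mult_left_le) auto
    then show ?thesis unfolding F1e using F2l by linarith
  qed
  have "A * (s * E / (1 + E)) < 1"
  proof (cases "A \<le> 0")
    case True then show ?thesis using p0 by (smt (verit) mult_nonpos_nonneg)
  next
    case False
    have q1: "E / (1 + E) < 1" using E0 by simp
    have As': "A * s \<le> 1" "0 < A * s" using As False s0 unfolding s_def by auto
    have "A * (s * E / (1 + E)) = (A * s) * (E / (1 + E))" by simp
    also have "\<dots> < (A * s) * 1" using As' q1 by (intro mult_strict_left_mono) auto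
    finally show ?thesis using As' by simp
  qed
  then have "0 < F2 k x * (1 - A * (s * E / (1 + E)))" using F2p by simp
  also have "F2 k x * (1 - A * (s * E / (1 + E))) = F2 k x - A * F1 k x"
    unfolding F1e by (simp add: algebra_simps)
  finally show "0 < F2 k x - A * F1 k x" .
qed


lemma F_meas: "F1 k \<in> borel_measurable lborel" "F2 k \<in> borel_measurable lborel"
  unfolding F1_def F2_def dphi_def phi_def by measurable

lemma integral_part:
  fixes k A :: real
  assumes k0: "0 \<le> k" and k1: "k \<le> 1/2" and As: "A * (sqrt 2 / 2) \<le> 1"
  shows "- A * (LBINT x. exp (- sqrt 2 * k * x) * (deriv phi x)^2)
     + (LBINT x. exp (- sqrt 2 * k * x) * deriv phi x * phi x) > 0"
proof -
  note pw = pointwise[OF k0 k1 As]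
  have i1: "integrable lborel (F1 k)"
    by (rule Bochner_Integration.integrable_bound[OF dphi_integrable F_meas(1)])
       (use pw dphi_pos in \<open>auto intro!: AE_I2 simp: abs_of_pos\<close>)
  have i2: "integrable lborel (F2 k)"
    by (rule Bochner_Integration.integrable_bound[OF dphi_integrable F_meas(2)])
       (use pw dphi_pos in \<open>auto intro!: AE_I2 simp: abs_of_pos\<close>)
  have ig: "integrable lborel (\<lambda>x. F2 k x - A * F1 k x)" using i1 i2 by auto
  have eq: "(LBINT x. F2 k x - A * F1 k x) = - A * (LBINT x. F1 k x) + (LBINT x. F2 k x)"
    using i1 i2 by simp
  have ge: "(LBINT x. F2 k x - A * F1 k x) \<ge> 0"
    using pw by (intro integral_nonneg_AE AE_I2) (auto intro: less_imp_le)
  have ne: "(LBINT x. F2 k x - A * F1 k x) \<noteq> 0"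
  proof
    assume "(LBINT x. F2 k x - A * F1 k x) = 0"
    then have "AE x in lborel. F2 k x - A * F1 k x = 0"
    proof -
      have nn: "AE x in lborel. 0 \<le> F2 k x - A * F1 k x"
        using pw by (intro AE_I2) (auto intro: less_imp_le)
      show ?thesis using integral_nonneg_eq_0_iff_AE[OF ig nn] \<open>(LBINT x. F2 k x - A * F1 k x) = 0\<close> by simp
    qed
    then have e0: "emeasure lborel {x \<in> space lborel. \<not> (F2 k x - A * F1 k x = 0)} = 0"
      by (rule AE_E2)
    have "{x \<in> space lborel. \<not> (F2 k x - A * F1 k x = 0)} = UNIV"
      using pw(5) by (auto simp: less_le)
    then show False using e0 by simp
  qed
  have "0 < - A * (LBINT x. F1 k x) + (LBINT x. F2 k x)" using ge ne eq by linarith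
  then show ?thesis unfolding F1_def F2_def deriv_phi .
qed


lemma qb_pos:
  assumes r: "2/3 < r" and u: "6/5 \<le> u"
  shows "0 < qb_of r u"
proof -
  have "-1 < (r + u - 2) / (r + 1/10)" using r u by (simp add: field_simps)
  then have "sqrt (-1) < sqrt ((r + u - 2) / (r + 1/10))" by (simp only: real_sqrt_less_iff)
  then show ?thesis unfolding qb_of_def by (simp add: real_sqrt_minus)
qed

lemma qb_mono:
  assumes r: "2/3 < r" and u: "u1 \<le> u2"
  shows "qb_of r u1 \<le> qb_of r u2"
proof -
  have "(r + u1 - 2) / (r + 1/10) \<le> (r + u2 - 2) / (r + 1/10)"
    using r u by (intro divide_right_mono) auto
  then show ?thesis unfolding qb_of_def by simp
qed

lemma ub_props:
  assumes r: "2/3 < r"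
  shows "6/5 < u_b r" "u_b r < 4/3" "2 - u_b r + 2 * qb_of r (u_b r) * (1 - u_b r) = 0"
proof -
  define F where "F u = 2 - u + 2 * qb_of r u * (1 - u)" for u
  have mono: "F u2 < F u1" if "6/5 \<le> u1" "u1 < u2" for u1 u2
  proof -
    have q1: "0 < qb_of r u1" using qb_pos r that by auto
    have q12: "qb_of r u1 \<le> qb_of r u2" using qb_mono r that by auto
    have "qb_of r u1 * (u1 - 1) < qb_of r u1 * (u2 - 1)" using q1 that by (intro mult_strict_left_mono) auto
    also have "\<dots> \<le> qb_of r u2 * (u2 - 1)" using q12 that by (intro mult_right_mono) auto
    finally show ?thesis unfolding F_def using that by (simp add: algebra_simps)
  qed
  have Fa: "F (6/5) > 0"
  proof -
    have "(r + 6/5 - 2) / (r + 1/10) < 1" using r by (simp add: field_simps)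
    then have "sqrt ((r + 6/5 - 2) / (r + 1/10)) < 1" by (simp add: real_sqrt_less_iff)
    then show ?thesis unfolding F_def qb_of_def by simp
  qed
  have Fb: "F (4/3) < 0"
  proof -
    have "0 < (r + 4/3 - 2) / (r + 1/10)" using r by (simp add: field_simps)
    then have "0 < sqrt ((r + 4/3 - 2) / (r + 1/10))" by simp
    then show ?thesis unfolding F_def qb_of_def by simp
  qed
  have cont: "continuous_on {6/5..4/3} F"
    unfolding F_def qb_of_def by (intro continuous_intros) (use r in auto)
  obtain u0 where u0: "6/5 \<le> u0" "u0 \<le> 4/3" "F u0 = 0"
    using IVT2'[of F "4/3" 0 "6/5", OF _ _ _ cont] Fa Fb by auto
  have u0o: "6/5 < u0" "u0 < 4/3"
  proof -
    show "6/5 < u0" proof (rule ccontr)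
      assume "\<not> 6/5 < u0" then have "u0 = 6/5" using u0 by linarith
      then show False using u0(3) Fa by (metis less_irrefl)
    qed
    show "u0 < 4/3" proof (rule ccontr)
      assume "\<not> u0 < 4/3" then have "u0 = 4/3" using u0 by linarith
      then show False using u0(3) Fb by (metis less_irrefl)
    qed
  qed
  have ex1: "\<exists>!u. u \<in> {6/5<..<4/3} \<and> 2 - u + 2 * qb_of r u * (1 - u) = 0"
  proof (rule ex1I[of _ u0])
    show "u0 \<in> {6/5<..<4/3} \<and> 2 - u0 + 2 * qb_of r u0 * (1 - u0) = 0"
      using u0o u0 unfolding F_def by auto
  next
    fix v assume v: "v \<in> {6/5<..<4/3} \<and> 2 - v + 2 * qb_of r v * (1 - v) = 0"
    then have Fv: "F v = 0" unfolding F_def by simp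
    show "v = u0"
    proof (rule ccontr)
      assume "v \<noteq> u0"
      then consider "v < u0" | "u0 < v" by linarith
      then show False
        using mono[of v u0] mono[of u0 v] Fv u0 u0o v by (cases; auto)
    qed
  qed
  have "u_b r \<in> {6/5<..<4/3} \<and> 2 - u_b r + 2 * qb_of r (u_b r) * (1 - u_b r) = 0"
    unfolding u_b_def by (rule theI'[OF ex1])
  then show "6/5 < u_b r" "u_b r < 4/3" "2 - u_b r + 2 * qb_of r (u_b r) * (1 - u_b r) = 0"
    by auto
qed


lemma main_r:
  assumes r1: "2/3 < r" and r2: "r < 2/3 + 1/10000"
  shows "M_f_tilde r > 0"
proof -
  define u where "u = u_b r"
  note U = ub_props[OF r1, folded u_def]
  define x where "x = sqrt (r / (r + 1/10))"
  define y where "y = sqrt ((r + u - 2) / (r + 1/10))"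
  have rp: "r + 1/10 > 0" using r1 by simp
  have qb: "qb_of r u = 1 + y" unfolding qb_of_def y_def ..
  have eq: "2 - u = 2 * (1 + y) * (u - 1)" using U(3) unfolding qb by (simp add: algebra_simps)
  have y0: "y > 0"
  proof (rule ccontr)
    assume "\<not> y > 0"
    then have "(1 + y) * (u - 1) \<le> 1 * (u - 1)" using U by (intro mult_right_mono) auto
    moreover have "2 - u = 2 * ((1 + y) * (u - 1))" using eq by (simp only: mult.assoc)
    moreover have "\<And>z. z \<le> u - 1 \<Longrightarrow> 2 - u = 2 * z \<Longrightarrow> False" using U by linarith
    ultimately show False by simp
  qed
  have argp: "(r + u - 2) / (r + 1/10) > 0" using y0 unfolding y_def by simp
  have y2: "y^2 = (r + u - 2) / (r + 1/10)" unfolding y_def using argp by simp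
  have "(r + u - 2) / (r + 1/10) < (3/250)^2"
    using rp r1 r2 U by (simp add: field_simps)
  then have yb: "y < 3/250" using y0 y2
    by (metis less_le power_less_imp_less_base zero_le_divide_iff zero_le_numeral)
  have x2: "x^2 = r / (r + 1/10)" unfolding x_def using rp r1 by simp
  have x0: "0 \<le> x" unfolding x_def using rp r1 by simp
  have "r / (r + 1/10) < (933/1000)^2" using rp r1 r2 by (simp add: field_simps)
  then have xb: "x < 933/1000" using x0 x2
    by (metis power_less_imp_less_base zero_le_divide_iff zero_le_numeral)
  have "(93/100)^2 < r / (r + 1/10)" using rp r1 r2 by (simp add: field_simps)
  then have xl: "93/100 < x" using x0 x2
    by (metis power_less_imp_less_base less_le_not_le less_le x0 zero_le_divide_iff zero_le_numeral)
  define S where "S = S_fun r"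
  have Se: "S = 3 * x + 3 * y - 2"
    unfolding S_def S_fun_def q_fp_def q_fm_def q_bp_def q_bm_def x_def[symmetric]
      u_def[symmetric] y_def[symmetric] by simp
  have S0: "0 < S" using Se xl y0 by simp
  have Sb: "S < 835/1000" using Se xb yb by simp
  have u2: "2 - u > 0" using U by simp
  define Q where "Q = (r + 1/10) / D0 r"
  have Qe: "Q = ((r + 1/10) * S / (sqrt 2 * (2 - u)))^2"
    unfolding Q_def D0_def u_def[symmetric] S_def[symmetric]
    using rp S0 u2 by (simp add: power_divide power_mult_distrib) (simp add: field_simps power2_eq_square)
  have sQ: "sqrt Q = (r + 1/10) * S / (sqrt 2 * (2 - u))"
    unfolding Qe using rp S0 u2 by (intro real_sqrt_unique) simp_all
  define A where "A = q_fp r * sqrt Q"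
  have qfp: "q_fp r = 1 + x" unfolding q_fp_def x_def ..
  have As_e: "A * (sqrt 2 / 2) = (1 + x) * (r + 1/10) * S / (2 * (2 - u))"
    unfolding A_def sQ qfp using u2 by (simp add: field_simps)
  have "(1 + x) * (r + 1/10) * S < (1933/1000) * (7668/10000) * (835/1000)"
    using xb x0 rp r2 S0 Sb by (intro mult_strict_mono) auto
  then have "(1 + x) * (r + 1/10) * S \<le> 2 * (2 - u)" using U by simp
  then have As: "A * (sqrt 2 / 2) \<le> 1" unfolding As_e using u2 by simp
  have qfm: "q_fm r = 1 - x" unfolding q_fm_def x_def ..
  have k0: "0 \<le> kappa_f r" and k1: "kappa_f r \<le> 1/2"
    unfolding kappa_f_def qfp qfm using xl xb by (simp_all add: field_simps)
  have "M_f_tilde r = - A * (LBINT x. exp (- sqrt 2 * kappa_f r * x) * (deriv phi x)^2)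
     + (LBINT x. exp (- sqrt 2 * kappa_f r * x) * deriv phi x * phi x)"
    unfolding M_f_tilde_def A_def Q_def by simp
  then show ?thesis using integral_part[OF k0 k1 As] by simp
qed

theorem theorem3:
  shows "\<exists>\<beta>::real. \<beta> > 2/3 \<and> (\<forall>r \<in> {2/3<..<\<beta>}. M_f_tilde r > 0)"
  by (rule exI[of _ "2/3 + 1/10000"]) (auto intro: main_r)

end
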